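(* For every integer $n\ge 5$, if $T$ is a standard Young tableau of shape $(n,n)$ chosen uniformly at random, then $$SP\big((n,n),[1,5],[2,2]\big)=\frac{45n^2-135n+30}{2(2n-5)(2n-1)(2n-3)}=\frac{45}{16}\cdot\frac1n+\frac{135}{32}\cdot\frac1{n^2}+\frac{75}{16}\cdot\frac1{n^3}+O\!\left(\frac1{n^4}\right).$$
   Context: A partition (shape) $\lambda=(\lambda_1,\dots,\lambda_k)$ with $\lambda_1\ge\dots\ge\lambda_k>0$ is identified with its Young diagram, the set of cells $[i,j]$ with $1\le i\le k$ and $1\le j\le\lambda_i$ (row $i$, column $j$). A standard Young tableau of shape $\lambda$ with $N=\sum\lambda_i$ cells is a bijective filling $T$ of the cells by $\{1,\dots,N\}$ with $T_{i,j}<T_{i,j+1}$ and $T_{i,j}<T_{i+1,j}$ whenever these cells exist. For cells $c_1,c_2$ of $\lambda$, the sorting probability is $SP(\lambda,c_1,c_2)=\Pr(T_{c_1}>T_{c_2})-\Pr(T_{c_2}>T_{c_1})=2\Pr(T_{c_1}>T_{c_2})-1$, where $T$ is uniformly random among standard Young tableaux of shape $\lambda$. *)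

theory Defs
  imports "HOL-Analysis.Analysis" "HOL-Library.Landau_Symbols"
begin

(* A partition is a list of positive parts, weakly decreasing. Cells are pairs (i,j),
   1-indexed: row i, column j. *)
definition young_diagram :: "nat list \<Rightarrow> (nat \<times> nat) set" where
  "young_diagram lam = {(i, j). 1 \<le> i \<and> i \<le> length lam \<and> 1 \<le> j \<and> j \<le> lam ! (i - 1)}"

definition is_partition :: "nat list \<Rightarrow> bool" where
  "is_partition lam \<longleftrightarrow> sorted_wrt (\<ge>) lam \<and> (\<forall>x \<in> set lam. x > 0)"

(* Standard Young tableaux of shape lam: bijective fillings of the cells by {1..N},
   increasing along rows and down columns; the value outside the diagram is fixed to 0
   so that the set of tableaux is finite. *)
definition SYT :: "nat list \<Rightarrow> ((nat \<times> nat) \<Rightarrow> nat) set" where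
  "SYT lam = {T. bij_betw T (young_diagram lam) {1..sum_list lam}
      \<and> (\<forall>c. c \<notin> young_diagram lam \<longrightarrow> T c = 0)
      \<and> (\<forall>i j. (i, j) \<in> young_diagram lam \<and> (i, j + 1) \<in> young_diagram lam
                 \<longrightarrow> T (i, j) < T (i, j + 1))
      \<and> (\<forall>i j. (i, j) \<in> young_diagram lam \<and> (i + 1, j) \<in> young_diagram lam
                 \<longrightarrow> T (i, j) < T (i + 1, j))}"

definition sorting_prob :: "nat list \<Rightarrow> nat \<times> nat \<Rightarrow> nat \<times> nat \<Rightarrow> real" where
  "sorting_prob lam c1 c2 =
     (real (card {T \<in> SYT lam. T c1 > T c2}) - real (card {T \<in> SYT lam. T c2 > T c1}))
       / real (card (SYT lam))"

end

theory Submission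
  imports Defs "HOL-Real_Asymp.Real_Asymp"
begin


lemma yd2: "(i,j) \<in> young_diagram [a,b] \<longleftrightarrow> (i=1 \<and> 1\<le>j \<and> j\<le>a) \<or> (i=2 \<and> 1\<le>j \<and> j\<le>b)"
  unfolding young_diagram_def
  by (auto simp: le_Suc_eq numeral_2_eq_2)

lemma SYT2: "T \<in> SYT [a,b] \<longleftrightarrow> bij_betw T (young_diagram [a,b]) {1..a+b}
      \<and> (\<forall>c. c \<notin> young_diagram [a,b] \<longrightarrow> T c = 0)
      \<and> (\<forall>i j. (i, j) \<in> young_diagram [a,b] \<and> (i, j + 1) \<in> young_diagram [a,b]
                 \<longrightarrow> T (i, j) < T (i, j + 1))
      \<and> (\<forall>i j. (i, j) \<in> young_diagram [a,b] \<and> (i + 1, j) \<in> young_diagram [a,b]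
                 \<longrightarrow> T (i, j) < T (i + 1, j))"
  unfolding SYT_def by simp

lemma SYT_bij: "T \<in> SYT [a,b] \<Longrightarrow> bij_betw T (young_diagram [a,b]) {1..a+b}"
  by (drule SYT2[THEN iffD1]) (rule conjunct1)

lemma SYT_val: assumes "T \<in> SYT [a,b]" "c \<in> young_diagram [a,b]"
  shows "1 \<le> T c \<and> T c \<le> a+b"
proof -
  have "T c \<in> {1..a+b}" by (rule bij_betw_apply[OF SYT_bij[OF assms(1)] assms(2)])
  then show ?thesis by simp
qed

lemma SYT_out: assumes "T \<in> SYT [a,b]" "c \<notin> young_diagram [a,b]" shows "T c = 0"
proof -
  have "\<forall>c. c \<notin> young_diagram [a,b] \<longrightarrow> T c = 0"
    using SYT2[THEN iffD1, OF assms(1)] by (elim conjE)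
  then show ?thesis using assms(2) by blast
qed

lemma SYT_row: assumes "T \<in> SYT [a,b]" "(i, j) \<in> young_diagram [a,b]" "(i, j + 1) \<in> young_diagram [a,b]"
  shows "T (i, j) < T (i, j + 1)"
proof -
  have "\<forall>i j. (i, j) \<in> young_diagram [a,b] \<and> (i, j + 1) \<in> young_diagram [a,b]
                 \<longrightarrow> T (i, j) < T (i, j + 1)"
    using SYT2[THEN iffD1, OF assms(1)] by (elim conjE)
  then show ?thesis using assms(2,3) by simp
qed

lemma SYT_col: assumes "T \<in> SYT [a,b]" "(i, j) \<in> young_diagram [a,b]" "(i+1, j) \<in> young_diagram [a,b]"
  shows "T (i, j) < T (i+1, j)"
proof -
  have "\<forall>i j. (i, j) \<in> young_diagram [a,b] \<and> (i+1, j) \<in> young_diagram [a,b]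
                 \<longrightarrow> T (i, j) < T (i+1, j)"
    using SYT2[THEN iffD1, OF assms(1)] by (elim conjE)
  then show ?thesis using assms(2,3) by simp
qed

lemma SYT_max_pos:
  assumes T: "T \<in> SYT [a,b]" and N: "T (i,j) = a+b" "a+b \<ge> 1"
  shows "(i,j) = (1,a) \<or> ((i,j) = (2,b) \<and> b \<ge> 1)"
proof -
  have cin: "(i,j) \<in> young_diagram [a,b]"
  proof (rule ccontr)
    assume "(i,j) \<notin> young_diagram [a,b]"
    then have "T (i,j) = 0" by (rule SYT_out[OF T])
    then show False using N by simp
  qed
  then have cc: "(i=1 \<and> 1\<le>j \<and> j\<le>a) \<or> (i=2 \<and> 1\<le>j \<and> j\<le>b)" by (simp only: yd2)
  have "\<not> (i,j+1) \<in> young_diagram [a,b]"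
  proof
    assume h: "(i,j+1) \<in> young_diagram [a,b]"
    have "T (i,j) < T(i,j+1)" by (rule SYT_row[OF T cin h])
    moreover have "T(i,j+1) \<le> a+b" using SYT_val[OF T h] by simp
    ultimately show False using N by simp
  qed
  then have "\<not> ((i=1 \<and> 1\<le>j+1 \<and> j+1\<le>a) \<or> (i=2 \<and> 1\<le>j+1 \<and> j+1\<le>b))" using yd2[of i "j+1" a b] by blast
  with cc show ?thesis by auto
qed

lemma yd_Suc1: "young_diagram [Suc a, b] = insert (1, Suc a) (young_diagram [a,b])"
proof (rule set_eqI)
  fix x :: "nat \<times> nat" obtain i j where x: "x = (i,j)" by (cases x)
  show "x \<in> young_diagram [Suc a, b] \<longleftrightarrow> x \<in> insert (1, Suc a) (young_diagram [a,b])"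
    unfolding x yd2 insert_iff prod.inject by linarith
qed
lemma yd_Suc2: "young_diagram [a, Suc b] = insert (2, Suc b) (young_diagram [a,b])"
proof (rule set_eqI)
  fix x :: "nat \<times> nat" obtain i j where x: "x = (i,j)" by (cases x)
  show "x \<in> young_diagram [a, Suc b] \<longleftrightarrow> x \<in> insert (2, Suc b) (young_diagram [a,b])"
    unfolding x yd2 insert_iff prod.inject by linarith
qed

lemma ins_gen:
  assumes T: "T \<in> SYT [a',b']" and D: "young_diagram [a,b] = insert c (young_diagram [a',b'])"
    and c: "c \<notin> young_diagram [a',b']" and N: "a+b = Suc (a'+b')"
    and noright: "\<And>i j. c = (i,j) \<Longrightarrow> (i,j+1) \<notin> young_diagram [a,b]"
    and nodown: "\<And>i j. c = (i,j) \<Longrightarrow> (i+1,j) \<notin> young_diagram [a,b]"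
  shows "T(c := a+b) \<in> SYT [a,b]"
proof -
  let ?T = "T(c := a+b)"
  have b0: "bij_betw T (young_diagram [a',b']) {1..a'+b'}" using SYT_bij[OF T] .
  have b1: "bij_betw ?T (young_diagram [a',b']) {1..a'+b'}"
    using b0 c by (subst bij_betw_cong[where g=T]) auto
  have b2: "bij_betw ?T {c} {a+b}" by auto
  have "bij_betw ?T (young_diagram [a',b'] \<union> {c}) ({1..a'+b'} \<union> {a+b})"
    by (rule bij_betw_combine[OF b1 b2]) (use N in auto)
  moreover have "young_diagram [a',b'] \<union> {c} = young_diagram [a,b]" using D by auto
  moreover have "{1..a'+b'} \<union> {a+b} = {1..a+b}" using N by auto
  ultimately have bij: "bij_betw ?T (young_diagram [a,b]) {1..a+b}" by (simp only:)
  have z: "\<forall>d. d \<notin> young_diagram [a,b] \<longrightarrow> ?T d = 0"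
    using SYT_out[OF T] D by auto
  have r: "\<forall>i j. (i, j) \<in> young_diagram [a,b] \<and> (i, j + 1) \<in> young_diagram [a,b]
                 \<longrightarrow> ?T (i, j) < ?T (i, j + 1)"
  proof (intro allI impI)
    fix i j assume h: "(i, j) \<in> young_diagram [a,b] \<and> (i, j + 1) \<in> young_diagram [a,b]"
    have "c \<noteq> (i,j)" using noright h by blast
    then have ij: "(i,j) \<in> young_diagram [a',b']" using h D by auto
    show "?T (i, j) < ?T (i, j + 1)"
    proof (cases "c = (i,j+1)")
      case True
      then show ?thesis using SYT_val[OF T ij] N \<open>c \<noteq> (i,j)\<close> by auto
    next
      case False
      then have "(i,j+1) \<in> young_diagram [a',b']" using h D by auto
      then show ?thesis using SYT_row[OF T ij] False \<open>c \<noteq> (i,j)\<close> by auto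
    qed
  qed
  have cl: "\<forall>i j. (i, j) \<in> young_diagram [a,b] \<and> (i+1, j) \<in> young_diagram [a,b]
                 \<longrightarrow> ?T (i, j) < ?T (i+1, j)"
  proof (intro allI impI)
    fix i j assume h: "(i, j) \<in> young_diagram [a,b] \<and> (i+1, j) \<in> young_diagram [a,b]"
    have "c \<noteq> (i,j)" using nodown h by blast
    then have ij: "(i,j) \<in> young_diagram [a',b']" using h D by auto
    show "?T (i, j) < ?T (i+1, j)"
    proof (cases "c = (i+1,j)")
      case True
      then show ?thesis using SYT_val[OF T ij] N \<open>c \<noteq> (i,j)\<close> by auto
    next
      case False
      then have "(i+1,j) \<in> young_diagram [a',b']" using h D by auto
      then show ?thesis using SYT_col[OF T ij] False \<open>c \<noteq> (i,j)\<close> by auto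
    qed
  qed
  show ?thesis unfolding SYT2 using bij z r cl by (intro conjI)
qed

lemma rem_gen:
  assumes T: "T \<in> SYT [a,b]" and D: "young_diagram [a,b] = insert c (young_diagram [a',b'])"
    and c: "c \<notin> young_diagram [a',b']" and N: "a+b = Suc (a'+b')" and Tc: "T c = a+b"
  shows "T(c := 0) \<in> SYT [a',b']"
proof -
  let ?T = "T(c := 0)"
  have b0: "bij_betw T (young_diagram [a,b]) {1..a+b}" using SYT_bij[OF T] .
  have "bij_betw T (young_diagram [a,b] - {c}) ({1..a+b} - {a+b})"
    by (rule bij_betw_DiffI[OF b0]) (use Tc D N in auto)
  moreover have "young_diagram [a,b] - {c} = young_diagram [a',b']" using D c by auto
  moreover have "{1..a+b} - {a+b} = {1..a'+b'}" using N by auto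
  ultimately have "bij_betw T (young_diagram [a',b']) {1..a'+b'}" by (simp only:)
  then have bij: "bij_betw ?T (young_diagram [a',b']) {1..a'+b'}"
    using c by (subst bij_betw_cong[where g=T]) auto
  have z: "\<forall>d. d \<notin> young_diagram [a',b'] \<longrightarrow> ?T d = 0"
    using SYT_out[OF T] D by auto
  have r: "\<forall>i j. (i, j) \<in> young_diagram [a',b'] \<and> (i, j + 1) \<in> young_diagram [a',b']
                 \<longrightarrow> ?T (i, j) < ?T (i, j + 1)"
    using SYT_row[OF T] D c by auto
  have cl: "\<forall>i j. (i, j) \<in> young_diagram [a',b'] \<and> (i+1, j) \<in> young_diagram [a',b']
                 \<longrightarrow> ?T (i, j) < ?T (i+1, j)"
    using SYT_col[OF T] D c by auto
  show ?thesis unfolding SYT2 using bij z r cl by (intro conjI)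
qed

lemma ins1: assumes "T \<in> SYT [a',b]" "b \<le> a'"
  shows "T((1,Suc a') := Suc a' + b) \<in> SYT [Suc a',b]"
  by (rule ins_gen[OF assms(1) yd_Suc1]) (use assms(2) in \<open>auto simp: yd2\<close>)

lemma ins2: assumes "T \<in> SYT [a,b']" "Suc b' \<le> a"
  shows "T((2,Suc b') := a + Suc b') \<in> SYT [a, Suc b']"
  by (rule ins_gen[OF assms(1) yd_Suc2]) (use assms(2) in \<open>auto simp: yd2\<close>)

lemma rem1: assumes "T \<in> SYT [Suc a',b]" "T (1,Suc a') = Suc a' + b"
  shows "T((1,Suc a') := 0) \<in> SYT [a',b]"
  by (rule rem_gen[OF assms(1) yd_Suc1 _ _ assms(2)]) (auto simp: yd2)

lemma rem2: assumes "T \<in> SYT [a,Suc b']" "T (2,Suc b') = a + Suc b'"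
  shows "T((2,Suc b') := 0) \<in> SYT [a,b']"
  by (rule rem_gen[OF assms(1) yd_Suc2 _ _ assms(2)]) (auto simp: yd2)

lemma SYT_split:
  assumes ba: "b \<le> a" and N: "1 \<le> a+b"
  shows "SYT [a,b] = (if b < a then (\<lambda>T. T((1,a):=a+b)) ` SYT [a-1,b] else {})
          \<union> (if 1 \<le> b then (\<lambda>T. T((2,b):=a+b)) ` SYT [a,b-1] else {})"
proof (rule set_eqI, rule iffI)
  fix T assume T: "T \<in> SYT [a,b]"
  have "a+b \<in> {1..a+b}" using N by simp
  then obtain c where cin: "c \<in> young_diagram [a,b]" and Tc: "T c = a+b"
    using bij_betw_imp_surj_on[OF SYT_bij[OF T]] by (metis imageE)
  obtain i j where c: "c = (i,j)" by (cases c)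
  have "(i,j) = (1,a) \<or> ((i,j) = (2,b) \<and> b \<ge> 1)" using SYT_max_pos[OF T] Tc N c by simp
  then show "T \<in> (if b < a then (\<lambda>T. T((1,a):=a+b)) ` SYT [a-1,b] else {})
          \<union> (if 1 \<le> b then (\<lambda>T. T((2,b):=a+b)) ` SYT [a,b-1] else {})"
  proof
    assume h: "(i,j) = (1,a)"
    then have a1: "1 \<le> a" using cin c by (simp add: yd2)
    then obtain a' where a': "a = Suc a'" by (cases a) auto
    have "b < a"
    proof (rule ccontr)
      assume "\<not> b < a"
      then have "b = a" using ba by simp
      then have "(1+1,a) \<in> young_diagram [a,b]" using a1 by (simp add: yd2)
      from SYT_col[OF T _ this] cin c h have "T (1,a) < T (2,a)" by (simp add: numeral_2_eq_2)
      moreover have "T (2,a) \<le> a+b" using SYT_val[OF T \<open>(1+1,a) \<in> _\<close>] by (simp add: numeral_2_eq_2)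
      ultimately show False using Tc c h by simp
    qed
    have "T((1,a):=0) \<in> SYT [a-1,b]" using rem1[of T a' b] T Tc c h a' by simp
    moreover have "T = (T((1,a):=0))((1,a):=a+b)" using Tc c h by auto
    ultimately have "T \<in> (\<lambda>T. T((1,a):=a+b)) ` SYT [a-1,b]" by blast
    then show ?thesis using \<open>b < a\<close> by simp
  next
    assume h: "(i,j) = (2,b) \<and> b \<ge> 1"
    then obtain b' where b': "b = Suc b'" by (cases b) auto
    have "T((2,b):=0) \<in> SYT [a,b-1]" using rem2[of T a b'] T Tc c h b' by simp
    moreover have "T = (T((2,b):=0))((2,b):=a+b)" using Tc c h by auto
    ultimately have "T \<in> (\<lambda>T. T((2,b):=a+b)) ` SYT [a,b-1]" by blast
    then show ?thesis using h by simp
  qed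
next
  fix T assume "T \<in> (if b < a then (\<lambda>T. T((1,a):=a+b)) ` SYT [a-1,b] else {})
          \<union> (if 1 \<le> b then (\<lambda>T. T((2,b):=a+b)) ` SYT [a,b-1] else {})"
  then show "T \<in> SYT [a,b]"
  proof
    assume "T \<in> (if b < a then (\<lambda>T. T((1,a):=a+b)) ` SYT [a-1,b] else {})"
    then have "b < a" "T \<in> (\<lambda>T. T((1,a):=a+b)) ` SYT [a-1,b]" by (simp_all split: if_splits)
    then obtain T' where h: "b < a" "T' \<in> SYT [a-1,b]" "T = T'((1,a):=a+b)"
      by blast
    then obtain a' where a': "a = Suc a'" by (cases a) auto
    show ?thesis using ins1[of T' a' b] h a' by simp
  next
    assume "T \<in> (if 1 \<le> b then (\<lambda>T. T((2,b):=a+b)) ` SYT [a,b-1] else {})"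
    then have "1 \<le> b" "T \<in> (\<lambda>T. T((2,b):=a+b)) ` SYT [a,b-1]" by (simp_all split: if_splits)
    then obtain T' where h: "1 \<le> b" "T' \<in> SYT [a,b-1]" "T = T'((2,b):=a+b)"
      by blast
    then obtain b' where b': "b = Suc b'" by (cases b) auto
    show ?thesis using ins2[of T' a b'] h b' ba by simp
  qed
qed

lemma SYT00: "SYT [0,0] = {\<lambda>_. 0}"
proof -
  have yd: "young_diagram [0,0] = {}" by (auto simp: yd2)
  show ?thesis
  proof (rule set_eqI, rule iffI)
    fix T assume "T \<in> SYT [0,0]"
    then have "\<forall>c. T c = 0" using SYT_out[of T 0 0] yd by blast
    then show "T \<in> {\<lambda>_. 0}" by auto
  next
    fix T :: "nat \<times> nat \<Rightarrow> nat" assume "T \<in> {\<lambda>_. 0}"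
    then have "T = (\<lambda>_. 0)" by simp
    then show "T \<in> SYT [0,0]" unfolding SYT2 yd by (simp add: bij_betw_def)
  qed
qed

lemma inj_upd1: "inj_on (\<lambda>T. T(c := v)) {T :: 'a \<Rightarrow> nat. T c = 0}"
proof (rule inj_onI)
  fix T T' :: "'a \<Rightarrow> nat" assume h: "T \<in> {T. T c = 0}" "T' \<in> {T. T c = 0}" "T(c := v) = T'(c := v)"
  show "T = T'"
  proof
    fix x show "T x = T' x"
    proof (cases "x = c")
      case True then show ?thesis using h by simp
    next
      case False then show ?thesis using fun_cong[OF h(3), of x] by simp
    qed
  qed
qed

lemma finite_SYT_aux: "\<forall>a b. a+b = n \<longrightarrow> b \<le> a \<longrightarrow> finite (SYT [a,b])"
proof (induction n)
  case 0
  then show ?case using SYT00 by simp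
next
  case (Suc n)
  show ?case
  proof (intro allI impI)
    fix a b assume h: "a+b = Suc n" "b \<le> a"
    have f1: "finite (if b < a then (\<lambda>T. T((1,a):=a+b)) ` SYT [a-1,b] else {})"
      using Suc.IH h by auto
    have f2: "finite (if 1 \<le> b then (\<lambda>T. T((2,b):=a+b)) ` SYT [a,b-1] else {})"
      using Suc.IH h by auto
    show "finite (SYT [a,b])" using SYT_split[OF h(2)] h f1 f2 by simp
  qed
qed

lemma finite_SYT: "b \<le> a \<Longrightarrow> finite (SYT [a,b])"
  using finite_SYT_aux by blast

lemma card_split:
  assumes ba: "b \<le> a" and N: "1 \<le> a+b"
  shows "card {T\<in>SYT [a,b]. Q T} =
     (if b < a then card {T\<in>SYT [a-1,b]. Q (T((1,a):=a+b))} else 0)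
   + (if 1 \<le> b then card {T\<in>SYT [a,b-1]. Q (T((2,b):=a+b))} else 0)"
proof -
  define A1 where "A1 = (if b < a then (\<lambda>T. T((1,a):=a+b)) ` {T\<in>SYT [a-1,b]. Q (T((1,a):=a+b))} else {})"
  define A2 where "A2 = (if 1 \<le> b then (\<lambda>T. T((2,b):=a+b)) ` {T\<in>SYT [a,b-1]. Q (T((2,b):=a+b))} else {})"
  have eq: "{T\<in>SYT [a,b]. Q T} = A1 \<union> A2"
    unfolding A1_def A2_def by (subst SYT_split[OF ba N]) auto
  have fin1: "finite A1" unfolding A1_def using finite_SYT[of b "a-1"] by auto
  have fin2: "finite A2" unfolding A2_def using finite_SYT[of "b-1" a] ba by auto
  have disj: "A1 \<inter> A2 = {}"
  proof (rule ccontr)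
    assume "A1 \<inter> A2 \<noteq> {}"
    then obtain T where t1: "T \<in> A1" and t2: "T \<in> A2" by blast
    from t1 have ba': "b < a" and "T (1,a) = a+b" unfolding A1_def by (auto split: if_splits)
    from t2 obtain T' where h: "1 \<le> b" "T' \<in> SYT [a,b-1]" "T = T'((2,b):=a+b)"
      unfolding A2_def by (auto split: if_splits)
    have "(1,a) \<in> young_diagram [a,b-1]" using ba' by (simp add: yd2)
    from SYT_val[OF h(2) this] have "T' (1,a) \<le> a + (b-1)" by simp
    then show False using h \<open>T (1,a) = a+b\<close> by simp
  qed
  have c1: "card A1 = (if b < a then card {T\<in>SYT [a-1,b]. Q (T((1,a):=a+b))} else 0)"
  proof (cases "b < a")
    case True
    have "inj_on (\<lambda>T. T((1,a):=a+b)) {T\<in>SYT [a-1,b]. Q (T((1,a):=a+b))}"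
    proof (rule inj_on_subset[OF inj_upd1])
      show "{T\<in>SYT [a-1,b]. Q (T((1,a):=a+b))} \<subseteq> {T. T (1,a) = 0}"
        using SYT_out[of _ "a-1" b "(1,a)"] True by (auto simp: yd2)
    qed
    then show ?thesis unfolding A1_def using True by (simp add: card_image)
  next
    case False then show ?thesis unfolding A1_def by simp
  qed
  have c2: "card A2 = (if 1 \<le> b then card {T\<in>SYT [a,b-1]. Q (T((2,b):=a+b))} else 0)"
  proof (cases "1 \<le> b")
    case True
    have "inj_on (\<lambda>T. T((2,b):=a+b)) {T\<in>SYT [a,b-1]. Q (T((2,b):=a+b))}"
    proof (rule inj_on_subset[OF inj_upd1])
      show "{T\<in>SYT [a,b-1]. Q (T((2,b):=a+b))} \<subseteq> {T. T (2,b) = 0}"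
        using SYT_out[of _ a "b-1" "(2,b)"] True by (auto simp: yd2)
    qed
    then show ?thesis unfolding A2_def using True by (simp add: card_image)
  next
    case False then show ?thesis unfolding A2_def by simp
  qed
  show ?thesis using eq card_Un_disjoint[OF fin1 fin2 disj] c1 c2 by simp
qed



definition Fc :: "nat \<Rightarrow> nat \<Rightarrow> real" where
  "Fc a b = (real a + 1 - real b) * fact (a+b) / (fact (a+1) * fact b)"

definition P :: "nat \<Rightarrow> nat \<Rightarrow> nat \<Rightarrow> real" where
  "P k a b = real ((a+b-k-2) choose (a-k)) - real ((a+b-k-2) choose (a-1))"

definition Gc :: "nat \<Rightarrow> nat \<Rightarrow> real" where
  "Gc a b = 2 * P 2 a b + 3 * P 3 a b + 4 * P 4 a b"

lemma Fc00: "Fc 0 0 = 1" by (simp add: Fc_def)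

lemma Fc_mult: "Fc a b * (fact (a+1) * fact b) = (real a + 1 - real b) * fact (a+b)"
  unfolding Fc_def by simp

lemma Fc_gen: "Fc (Suc a) (Suc b) = Fc a (Suc b) + Fc (Suc a) b"
proof -
  define D :: real where "D = fact (a+2) * fact (b+1)"
  have Dp: "D > 0" unfolding D_def by simp
  have fa: "fact (a+2) = (real a + 2) * (fact (a+1) :: real)"
    using fact_Suc[of "a+1", where 'a=real] by (simp add: add.commute)
  have fb: "fact (b+1) = (real b + 1) * (fact b :: real)"
    using fact_Suc[of "b", where 'a=real] by (simp add: add.commute)
  have fab: "fact (a+b+2) = (real a + real b + 2) * (fact (a+b+1) :: real)"
    using fact_Suc[of "a+b+1", where 'a=real] by (simp add: add.commute)
  have l: "Fc (Suc a) (Suc b) * D = (real a + 1 - real b) * (real a + real b + 2) * fact (a+b+1)"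
    using Fc_mult[of "Suc a" "Suc b"] fab unfolding D_def by (simp add: algebra_simps)
  have r1: "Fc a (Suc b) * D = (real a - real b) * (real a + 2) * fact (a+b+1)"
  proof -
    have "Fc a (Suc b) * D = (Fc a (Suc b) * (fact (a+1) * fact (Suc b))) * (real a + 2)"
      unfolding D_def fa by (simp add: algebra_simps)
    also have "\<dots> = (real a - real b) * (real a + 2) * fact (a+b+1)"
      unfolding Fc_mult by (simp add: algebra_simps)
    finally show ?thesis .
  qed
  have r2: "Fc (Suc a) b * D = (real a + 2 - real b) * (real b + 1) * fact (a+b+1)"
  proof -
    have "Fc (Suc a) b * D = (Fc (Suc a) b * (fact (Suc a+1) * fact b)) * (real b + 1)"
      unfolding D_def fb by (simp add: algebra_simps)
    also have "\<dots> = (real a + 2 - real b) * (real b + 1) * fact (a+b+1)"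
      unfolding Fc_mult by (simp add: algebra_simps)
    finally show ?thesis .
  qed
  have "Fc (Suc a) (Suc b) * D = (Fc a (Suc b) + Fc (Suc a) b) * D"
    unfolding distrib_right l r1 r2 by (simp add: algebra_simps)
  then show ?thesis using Dp by simp
qed

lemma Fc_diag: "Fc a (Suc a) = 0" by (simp add: Fc_def)

lemma Fc_b0: "Fc a 0 = 1"
proof -
  have "Fc a 0 * (real a + 1) = 1 * (real a + 1)" using Fc_mult[of a 0] by (simp add: add.commute)
  moreover have nz: "real a + 1 \<noteq> 0" by linarith
  ultimately show ?thesis by simp
qed

lemma Fc_rec: assumes "b \<le> a" "1 \<le> a+b"
  shows "Fc a b = (if b < a then Fc (a-1) b else 0) + (if 1 \<le> b then Fc a (b-1) else 0)"
proof (cases b)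
  case 0
  then obtain a' where "a = Suc a'" using assms by (cases a) auto
  then show ?thesis using 0 Fc_b0 by simp
next
  case (Suc b')
  then obtain a' where a: "a = Suc a'" using assms by (cases a) auto
  show ?thesis
  proof (cases "b < a")
    case True then show ?thesis using Fc_gen[of a' b'] a Suc by simp
  next
    case False
    then have "a' = b'" using assms a Suc by simp
    then show ?thesis using Fc_gen[of a' b'] Fc_diag[of a'] a Suc False by simp
  qed
qed

lemma P_pascal: assumes "1 \<le> k" "k+1 \<le> a" "1 \<le> b" "k+3 \<le> a+b"
  shows "P k a b = P k (a-1) b + P k a (b-1)"
proof -
  define m where "m = a+b-k-2"
  have m1: "m \<ge> 1" using assms unfolding m_def by simp
  have i1: "a-1+b-k-2 = m-1" "a+(b-1)-k-2 = m-1" "a-1-k = a-k-1"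
    using assms unfolding m_def by auto
  have c1: "m choose (a-k) = ((m-1) choose (a-k-1)) + ((m-1) choose (a-k))"
    by (rule choose_reduce_nat) (use m1 assms in auto)
  have c2: "m choose (a-1) = ((m-1) choose (a-1-1)) + ((m-1) choose (a-1))"
    by (rule choose_reduce_nat) (use m1 assms in auto)
  show ?thesis unfolding P_def m_def[symmetric] i1 c1 c2 by simp
qed

lemma P_b1: assumes "1 \<le> k" "k+1 \<le> a" shows "P k a 1 = 0"
  using assms by (simp add: P_def binomial_eq_0)

lemma P_diag: assumes "k+1 \<le> a" shows "P k (a-1) a = 0"
proof -
  have "(a-1+a-k-2) choose (a-1-k) = (a-1+a-k-2) choose ((a-1+a-k-2) - (a-1-k))"
    by (rule binomial_symmetric) (use assms in auto)
  moreover have "(a-1+a-k-2) - (a-1-k) = a-1-1" using assms by auto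
  ultimately show ?thesis by (simp add: P_def)
qed

lemma G_pascal: "5 \<le> a \<Longrightarrow> 2 \<le> b \<Longrightarrow> Gc a b = Gc (a-1) b + Gc a (b-1)"
  unfolding Gc_def using P_pascal[of 2 a b] P_pascal[of 3 a b] P_pascal[of 4 a b] by simp

lemma G_b1: "5 \<le> a \<Longrightarrow> Gc a 1 = 0"
  unfolding Gc_def using P_b1[of 2 a] P_b1[of 3 a] P_b1[of 4 a] by simp

lemma G_diag: "5 \<le> a \<Longrightarrow> Gc (a-1) a = 0"
  unfolding Gc_def using P_diag[of 2 a] P_diag[of 3 a] P_diag[of 4 a] by simp

lemma G4: "2 \<le> b \<Longrightarrow> b \<le> 4 \<Longrightarrow> Gc 4 b = Fc 4 b"
proof -
  assume "2 \<le> b" "b \<le> 4"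
  then have "b = 2 \<or> b = 3 \<or> b = 4" by auto
  then show ?thesis by (elim disjE) (simp_all add: Gc_def P_def Fc_def numeral_eq_Suc)
qed

lemma G_rec: assumes "5 \<le> a" "2 \<le> b" "b \<le> a"
  shows "Gc a b = (if b < a then (if a = 5 then Fc 4 b else Gc (a-1) b) else 0)
                 + (if b = 2 then 0 else Gc a (b-1))"
proof -
  have g: "Gc a b = Gc (a-1) b + Gc a (b-1)" using G_pascal assms by simp
  have x: "Gc a (b-1) = (if b = 2 then 0 else Gc a (b-1))" using G_b1[of a] assms by auto
  have y: "Gc (a-1) b = (if b < a then (if a = 5 then Fc 4 b else Gc (a-1) b) else 0)"
  proof (cases "b < a")
    case True
    then show ?thesis using G4[of b] assms by auto
  next
    case False
    then have "b = a" using assms by simp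
    then show ?thesis using G_diag[of a] assms by simp
  qed
  show ?thesis using g x y by simp
qed

lemma Pn: "P 2 (m+5) (m+5) = real ((2*m+6) choose (m+3)) - real ((2*m+6) choose (m+4))"
          "P 3 (m+5) (m+5) = real ((2*m+5) choose (m+2)) - real ((2*m+5) choose (m+4))"
          "P 4 (m+5) (m+5) = real ((2*m+4) choose (m+1)) - real ((2*m+4) choose (m+4))"
proof -
  have "m+5+(m+5)-2-2 = 2*m+6" "m+5-2 = m+3" "m+5-1 = m+4"
       "m+5+(m+5)-3-2 = 2*m+5" "m+5-3 = m+2"
       "m+5+(m+5)-4-2 = 2*m+4" "m+5-4 = m+1" by auto
  then show "P 2 (m+5) (m+5) = real ((2*m+6) choose (m+3)) - real ((2*m+6) choose (m+4))"
          "P 3 (m+5) (m+5) = real ((2*m+5) choose (m+2)) - real ((2*m+5) choose (m+4))"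
          "P 4 (m+5) (m+5) = real ((2*m+4) choose (m+1)) - real ((2*m+4) choose (m+4))"
    unfolding P_def by presburger+
qed

lemma bf: "k \<le> n \<Longrightarrow> n - k = j \<Longrightarrow> real (n choose k) = fact n / (fact k * fact j)"
  using binomial_fact[of k n, where 'a=real] by simp

lemma atoms:
  fixes A B y1 y2 y3 y4 y5 y6 z5 z6 z7 z8 z9 z10 :: real
  assumes nz: "A \<noteq> 0" "B \<noteq> 0" "y1 \<noteq> 0" "y2 \<noteq> 0" "y3 \<noteq> 0" "y4 \<noteq> 0" "y5 \<noteq> 0" "y6 \<noteq> 0"
     "z5 \<noteq> 0" "z6 \<noteq> 0" "z7 \<noteq> 0" "z8 \<noteq> 0" "z9 \<noteq> 0" "z10 \<noteq> 0"
  shows "(2 * (2 * (z6*z5*A / (y3*y2*y1*B * (y3*y2*y1*B)) - z6*z5*A / (y4*y3*y2*y1*B * (y2*y1*B)))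
    + 3 * (z5*A / (y2*y1*B * (y3*y2*y1*B)) - z5*A / (y4*y3*y2*y1*B * (y1*B)))
    + 4 * (A / (y1*B * (y3*y2*y1*B)) - A / (y4*y3*y2*y1*B * B)))
    - z10*z9*z8*z7*z6*z5*A / (y6*y5*y4*y3*y2*y1*B * (y5*y4*y3*y2*y1*B)))
    / (z10*z9*z8*z7*z6*z5*A / (y6*y5*y4*y3*y2*y1*B * (y5*y4*y3*y2*y1*B)))
   = (2 * (2*z6*z5*(y4 - y3) + 3*z5*(y3*y4 - y2*y3) + 4*(y2*y3*y4 - y1*y2*y3)) * y6*y5*y5*y4
      - z10*z9*z8*z7*z6*z5) / (z10*z9*z8*z7*z6*z5)"
  using nz by (simp add: field_simps)

lemma final_alg:
  fixes m :: nat
  defines "x \<equiv> real m"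
  shows "(2 * Gc (m+5) (m+5) - Fc (m+5) (m+5)) / Fc (m+5) (m+5)
     = (45 * (x+5) ^ 2 - 135 * (x+5) + 30) / (2 * (2 * (x+5) - 5) * (2 * (x+5) - 1) * (2 * (x+5) - 3))"
proof -
  define A :: real where "A = fact (2*m+4)"
  define B :: real where "B = fact m"
  have Ap: "A > 0" and Bp: "B > 0" unfolding A_def B_def by simp_all
  have x0: "x \<ge> 0" unfolding x_def by simp
  have f1: "fact (m+1) = (x+1)*B" unfolding B_def x_def by (simp add: numeral_eq_Suc fact_Suc algebra_simps)
  have f2: "fact (m+2) = (x+2)*(x+1)*B" unfolding B_def x_def by (simp add: numeral_eq_Suc fact_Suc algebra_simps)
  have f3: "fact (m+3) = (x+3)*(x+2)*(x+1)*B" unfolding B_def x_def by (simp add: numeral_eq_Suc fact_Suc algebra_simps)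
  have f4: "fact (m+4) = (x+4)*(x+3)*(x+2)*(x+1)*B" unfolding B_def x_def by (simp add: numeral_eq_Suc fact_Suc algebra_simps)
  have f5: "fact (m+5) = (x+5)*(x+4)*(x+3)*(x+2)*(x+1)*B" unfolding B_def x_def by (simp add: numeral_eq_Suc fact_Suc algebra_simps)
  have f6: "fact (m+6) = (x+6)*(x+5)*(x+4)*(x+3)*(x+2)*(x+1)*B" unfolding B_def x_def by (simp add: numeral_eq_Suc fact_Suc algebra_simps)
  have h5: "fact (2*m+5) = (2*x+5)*A" unfolding A_def x_def by (simp add: numeral_eq_Suc fact_Suc algebra_simps)
  have h6: "fact (2*m+6) = (2*x+6)*(2*x+5)*A" unfolding A_def x_def by (simp add: numeral_eq_Suc fact_Suc algebra_simps)
  have h10: "fact (2*m+10) = (2*x+10)*(2*x+9)*(2*x+8)*(2*x+7)*(2*x+6)*(2*x+5)*A" unfolding A_def x_def by (simp add: numeral_eq_Suc fact_Suc algebra_simps)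
  have F: "Fc (m+5) (m+5) = (2*x+10)*(2*x+9)*(2*x+8)*(2*x+7)*(2*x+6)*(2*x+5)*A / ((x+6)*(x+5)*(x+4)*(x+3)*(x+2)*(x+1)*B * ((x+5)*(x+4)*(x+3)*(x+2)*(x+1)*B))"
  proof -
    have "m+5+(m+5) = 2*m+10" "m+5+1 = m+6" by simp_all
    then show ?thesis unfolding Fc_def h10[symmetric] f6[symmetric] f5[symmetric] by (simp add: ac_simps)
  qed
  have G: "Gc (m+5) (m+5) =
      2 * ((2*x+6)*(2*x+5)*A / ((x+3)*(x+2)*(x+1)*B * ((x+3)*(x+2)*(x+1)*B)) - (2*x+6)*(2*x+5)*A / ((x+4)*(x+3)*(x+2)*(x+1)*B * ((x+2)*(x+1)*B)))
    + 3 * ((2*x+5)*A / ((x+2)*(x+1)*B * ((x+3)*(x+2)*(x+1)*B)) - (2*x+5)*A / ((x+4)*(x+3)*(x+2)*(x+1)*B * ((x+1)*B)))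
    + 4 * (A / ((x+1)*B * ((x+3)*(x+2)*(x+1)*B)) - A / ((x+4)*(x+3)*(x+2)*(x+1)*B * B))"
    unfolding Gc_def Pn
    by (simp only: bf[of "m+3" "2*m+6" "m+3"] bf[of "m+4" "2*m+6" "m+2"] bf[of "m+2" "2*m+5" "m+3"]
      bf[of "m+4" "2*m+5" "m+1"] bf[of "m+1" "2*m+4" "m+3"] bf[of "m+4" "2*m+4" "m"]
      f1 f2 f3 f4 h5 h6 B_def[symmetric] A_def[symmetric] le_add1 diff_add_inverse)
    have nz: "x+1 \<noteq> 0" "x+2 \<noteq> 0" "x+3 \<noteq> 0" "x+4 \<noteq> 0" "x+5 \<noteq> 0" "x+6 \<noteq> 0"
      "2*x+5 \<noteq> 0" "2*x+6 \<noteq> 0" "2*x+7 \<noteq> 0" "2*x+8 \<noteq> 0" "2*x+9 \<noteq> 0" "2*x+10 \<noteq> 0"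
      "2*(x+5)-5 \<noteq> 0" "2*(x+5)-1 \<noteq> 0" "2*(x+5)-3 \<noteq> 0" "A \<noteq> 0" "B \<noteq> 0"
      using x0 Ap Bp by auto
    show ?thesis
    unfolding F G atoms[OF nz(16,17,1-6,7-12)]
    using nz(7-15) by (simp add: frac_eq_eq) (simp add: algebra_simps power2_eq_square)
qed



lemma cardS_aux: "\<forall>a b. a+b = n \<longrightarrow> b \<le> a \<longrightarrow> real (card (SYT [a,b])) = Fc a b"
proof (induction n)
  case 0 then show ?case using SYT00 Fc00 by simp
next
  case (Suc n)
  show ?case
  proof (intro allI impI)
    fix a b assume h: "a+b = Suc n" "b \<le> a"
    have cs: "card {T\<in>SYT [a,b]. True} =
     (if b < a then card {T\<in>SYT [a-1,b]. True} else 0)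
   + (if 1 \<le> b then card {T\<in>SYT [a,b-1]. True} else 0)"
      by (rule card_split) (use h in auto)
    have i1: "b < a \<Longrightarrow> real (card (SYT [a-1,b])) = Fc (a-1) b" using Suc.IH h by auto
    have i2: "1 \<le> b \<Longrightarrow> real (card (SYT [a,b-1])) = Fc a (b-1)" using Suc.IH h by auto
    have "real (card (SYT [a,b])) = (if b < a then Fc (a-1) b else 0) + (if 1 \<le> b then Fc a (b-1) else 0)"
      using cs i1 i2 by (simp split: if_splits)
    then show "real (card (SYT [a,b])) = Fc a b" using Fc_rec[of b a] h by simp
  qed
qed

lemma cardS: "b \<le> a \<Longrightarrow> real (card (SYT [a,b])) = Fc a b"
  using cardS_aux by blast

lemma cardG_aux: "\<forall>a b. a+b = n \<longrightarrow> 5 \<le> a \<longrightarrow> 2 \<le> b \<longrightarrow> b \<le> a \<longrightarrow>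
   real (card {T\<in>SYT [a,b]. T (2,2) < T (1,5)}) = Gc a b"
proof (induction n)
  case 0 then show ?case by simp
next
  case (Suc n)
  show ?case
  proof (intro allI impI)
    fix a b assume h: "a+b = Suc n" "5 \<le> a" "2 \<le> b" "b \<le> a"
    let ?Q = "\<lambda>T::nat\<times>nat\<Rightarrow>nat. T (2,2) < T (1,5)"
    have cs: "card {T\<in>SYT [a,b]. ?Q T} =
     (if b < a then card {T\<in>SYT [a-1,b]. ?Q (T((1,a):=a+b))} else 0)
   + (if 1 \<le> b then card {T\<in>SYT [a,b-1]. ?Q (T((2,b):=a+b))} else 0)"
      by (rule card_split) (use h in auto)
    have t1: "b < a \<Longrightarrow> real (card {T\<in>SYT [a-1,b]. ?Q (T((1,a):=a+b))})
        = (if a = 5 then Fc 4 b else Gc (a-1) b)"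
    proof -
      assume ba: "b < a"
      show ?thesis
      proof (cases "a = 5")
        case True
        have "{T\<in>SYT [a-1,b]. ?Q (T((1,a):=a+b))} = SYT [4,b]"
        proof (rule set_eqI, rule iffI)
          fix T assume "T \<in> {T\<in>SYT [a-1,b]. ?Q (T((1,a):=a+b))}"
          then show "T \<in> SYT [4,b]" using True by simp
        next
          fix T assume T: "T \<in> SYT [4,b]"
          have "(2,2) \<in> young_diagram [4,b]" using h by (simp add: yd2)
          from SYT_val[OF T this] have "T (2,2) \<le> 4+b" by simp
          then show "T \<in> {T\<in>SYT [a-1,b]. ?Q (T((1,a):=a+b))}" using T True by simp
        qed
        then show ?thesis using True cardS[of b 4] ba by simp
      next
        case False
        have "{T\<in>SYT [a-1,b]. ?Q (T((1,a):=a+b))} = {T\<in>SYT [a-1,b]. ?Q T}"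
          using False h by auto
        moreover have "real (card {T\<in>SYT [a-1,b]. ?Q T}) = Gc (a-1) b"
          using Suc.IH h ba False by auto
        ultimately show ?thesis using False by simp
      qed
    qed
    have t2: "real (card {T\<in>SYT [a,b-1]. ?Q (T((2,b):=a+b))}) = (if b = 2 then 0 else Gc a (b-1))"
    proof (cases "b = 2")
      case True
      have e: "{T\<in>SYT [a,b-1]. ?Q (T((2,b):=a+b))} = {}"
      proof (rule ccontr)
        assume "{T\<in>SYT [a,b-1]. ?Q (T((2,b):=a+b))} \<noteq> {}"
        then obtain T where T: "T \<in> SYT [a,b-1]" "?Q (T((2,b):=a+b))" by blast
        have "(1,5) \<in> young_diagram [a,b-1]" using h by (simp add: yd2)
        from SYT_val[OF T(1) this] have "T (1,5) \<le> a+(b-1)" by simp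
        then show False using T(2) True by simp
      qed
      show ?thesis unfolding e using True by simp
    next
      case False
      have "{T\<in>SYT [a,b-1]. ?Q (T((2,b):=a+b))} = {T\<in>SYT [a,b-1]. ?Q T}"
        using False h by auto
      moreover have "real (card {T\<in>SYT [a,b-1]. ?Q T}) = Gc a (b-1)"
        using Suc.IH h False by auto
      ultimately show ?thesis using False by simp
    qed
    have "real (card {T\<in>SYT [a,b]. ?Q T}) = (if b < a then (if a = 5 then Fc 4 b else Gc (a-1) b) else 0)
                 + (if b = 2 then 0 else Gc a (b-1))"
      using cs t1 t2 h by (simp split: if_splits)
    then show "real (card {T\<in>SYT [a,b]. ?Q T}) = Gc a b" using G_rec[of a b] h by simp
  qed
qed

lemma cardG: "5 \<le> a \<Longrightarrow> 2 \<le> b \<Longrightarrow> b \<le> a \<Longrightarrow>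
   real (card {T\<in>SYT [a,b]. T (2,2) < T (1,5)}) = Gc a b"
  using cardG_aux by blast

lemma SP_closed: assumes "5 \<le> n"
  shows "sorting_prob [n,n] (1,5) (2,2) = (2 * Gc n n - Fc n n) / Fc n n"
proof -
  let ?S = "SYT [n,n]"
  let ?A = "{T\<in>?S. T (2,2) < T (1,5)}"
  have fin: "finite ?S" using finite_SYT by simp
  have e1: "{T \<in> ?S. T (1,5) > T (2,2)} = ?A" by blast
  have e2: "{T \<in> ?S. T (2,2) > T (1,5)} = ?S - ?A"
  proof (rule set_eqI, rule iffI)
    fix T assume "T \<in> {T \<in> ?S. T (2,2) > T (1,5)}" then show "T \<in> ?S - ?A" by simp
  next
    fix T assume T: "T \<in> ?S - ?A"
    have i1: "(2,2) \<in> young_diagram [n,n]" "(1,5) \<in> young_diagram [n,n]" using assms by (simp_all add: yd2)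
    have inj: "inj_on T (young_diagram [n,n])" using SYT_bij[of T n n] T by (simp add: bij_betw_def)
    have "T (2,2) \<noteq> T (1,5)"
    proof
      assume "T (2,2) = T (1,5)"
      then have "((2::nat),(2::nat)) = (1,5)" using inj_onD[OF inj _ i1] by blast
      then show False by simp
    qed
    moreover have "\<not> T (2,2) < T (1,5)" "T \<in> ?S" using T by blast+
    ultimately have "T (1,5) < T (2,2)" "T \<in> ?S" by linarith+
    then show "T \<in> {T \<in> ?S. T (2,2) > T (1,5)}" by blast
  qed
  have c2: "card (?S - ?A) = card ?S - card ?A" by (rule card_Diff_subset) (use fin in simp_all)
  have le: "card ?A \<le> card ?S" by (rule card_mono[OF fin]) blast
  have cS: "real (card ?S) = Fc n n" using cardS[of n n] by simp
  have cA: "real (card ?A) = Gc n n" using cardG[of n n] assms by simp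
  show ?thesis
    unfolding sorting_prob_def e2 c2 of_nat_diff[OF le] cS cA by simp
qed


lemma part1: assumes "5 \<le> n"
  shows "sorting_prob [n, n] (1, 5) (2, 2)
             = (45 * real n ^ 2 - 135 * real n + 30)
                 / (2 * (2 * real n - 5) * (2 * real n - 1) * (2 * real n - 3))"
proof -
  define m where "m = n - 5"
  have nm: "n = m + 5" using assms unfolding m_def by simp
  have x: "real m + 5 = real n" using nm by simp
  show ?thesis using SP_closed[OF assms] final_alg[of m] unfolding x nm[symmetric] by simp
qed

theorem mainTheorem2:
  shows "(\<forall>n::nat. n \<ge> 5 \<longrightarrow>
           sorting_prob [n, n] (1, 5) (2, 2)
             = (45 * real n ^ 2 - 135 * real n + 30)
                 / (2 * (2 * real n - 5) * (2 * real n - 1) * (2 * real n - 3)))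
       \<and> (\<lambda>n::nat. sorting_prob [n, n] (1, 5) (2, 2)
              - (45 / 16 * (1 / real n) + 135 / 32 * (1 / real n ^ 2) + 75 / 16 * (1 / real n ^ 3)))
           \<in> O(\<lambda>n. 1 / real n ^ 4)"
proof
  show "\<forall>n::nat. n \<ge> 5 \<longrightarrow>
           sorting_prob [n, n] (1, 5) (2, 2)
             = (45 * real n ^ 2 - 135 * real n + 30)
                 / (2 * (2 * real n - 5) * (2 * real n - 1) * (2 * real n - 3))"
    using part1 by blast
  have ev: "eventually (\<lambda>n::nat. (\<lambda>n. sorting_prob [n, n] (1, 5) (2, 2)
              - (45 / 16 * (1 / real n) + 135 / 32 * (1 / real n ^ 2) + 75 / 16 * (1 / real n ^ 3))) n
       = (\<lambda>n. (45 * real n ^ 2 - 135 * real n + 30)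
                 / (2 * (2 * real n - 5) * (2 * real n - 1) * (2 * real n - 3))
              - (45 / 16 * (1 / real n) + 135 / 32 * (1 / real n ^ 2) + 75 / 16 * (1 / real n ^ 3))) n) at_top"
    using eventually_ge_at_top[of "5::nat"] by eventually_elim (metis part1)
  have "(\<lambda>n::nat. (45 * real n ^ 2 - 135 * real n + 30)
                 / (2 * (2 * real n - 5) * (2 * real n - 1) * (2 * real n - 3))
              - (45 / 16 * (1 / real n) + 135 / 32 * (1 / real n ^ 2) + 75 / 16 * (1 / real n ^ 3)))
           \<in> O(\<lambda>n. 1 / real n ^ 4)"
    by real_asymp
  then show "(\<lambda>n::nat. sorting_prob [n, n] (1, 5) (2, 2)
              - (45 / 16 * (1 / real n) + 135 / 32 * (1 / real n ^ 2) + 75 / 16 * (1 / real n ^ 3)))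
           \<in> O(\<lambda>n. 1 / real n ^ 4)"
    using landau_o.big.in_cong[OF ev] by simp
qed

end
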